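(* Let $0<p<1/2$, $c>0$, and $n$ such that $k=c\log_2 n$ is an integer with $k\ge2$. Let $\epsilon_n>0$, $\delta\in(0,1)$, and let $\mathcal A\subseteq\{0,1\}^n$ be such that $\|K_s-K_{s'}\|_\infty\ge 2\epsilon_n$ for all distinct $s,s'\in\mathcal A$. Then there is a procedure which, given $T\ge \ln\!\left(\frac{2n^{1+c}}{\delta}\right)\epsilon_n^{-2} f_c(n)$ independent traces of an unknown source string $s\in\mathcal A$, outputs $s$ with probability at least $1-\delta$.
   Context: Deletion channel: for $s\in\{0,1\}^n$ and deletion probability $p\in[0,1)$, a trace of $s$ is obtained by deleting each bit of $s$ independently with probability $p$; distinct traces are independent. Strings are indexed from 1 and $s[a:b]=(s[a],\dots,s[b])$. For $x\in\{0,1\}^k$ and $i\in\{1,\dots,n-k+1\}$, $K_{s,x}[i]=\sum_{j=1}^{n-k+1}\binom{j-1}{i-1}(1-p)^{i-1}p^{j-i}\,\mathbb 1\{s[j:j+k-1]=x\}$ (with $\binom{j-1}{i-1}=0$ if $j<i$); $K_s$ is the concatenation of $K_{s,x}$ over all $x\in\{0,1\}^k$ and $\|\cdot\|_\infty$ is the maximum absolute entry. $H$ is the binary entropy (base 2). $\alpha_c(p)=1+c\log_2\frac{1-p}{p}+\frac{cH(1-\frac{p}{1-p})+c\log_2\frac{p}{1-p}}{1-\frac{p}{1-p}}$ and $f_c(n)=\frac{(1+2n^{\alpha_c(p)})^2}{2n^{2c\log_2(1-p)-1}}$. *)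

theory Defs
  imports "HOL-Probability.Probability"
begin

text \<open>Binary strings are boolean lists. One trace of the deletion channel with deletion
probability p: each bit is kept independently with probability 1 - p.\<close>

fun trace_pmf :: "real \<Rightarrow> bool list \<Rightarrow> bool list pmf" where
  "trace_pmf p [] = return_pmf []"
| "trace_pmf p (b # bs) =
     bind_pmf (bernoulli_pmf (1 - p)) (\<lambda>keep.
     bind_pmf (trace_pmf p bs) (\<lambda>rest.
     return_pmf (if keep then b # rest else rest)))"

fun traces_pmf :: "real \<Rightarrow> nat \<Rightarrow> bool list \<Rightarrow> bool list list pmf" where
  "traces_pmf p 0 s = return_pmf []"
| "traces_pmf p (Suc T) s =
     bind_pmf (trace_pmf p s) (\<lambda>t.
     bind_pmf (traces_pmf p T s) (\<lambda>ts.
     return_pmf (t # ts)))"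

text \<open>Substring s[a:b] with 1-based indexing.\<close>

definition substr :: "bool list \<Rightarrow> nat \<Rightarrow> nat \<Rightarrow> bool list" where
  "substr s a b = take (b + 1 - a) (drop (a - 1) s)"

definition Kfun :: "real \<Rightarrow> nat \<Rightarrow> bool list \<Rightarrow> bool list \<Rightarrow> nat \<Rightarrow> real" where
  "Kfun p k s x i =
     (\<Sum>j = 1..length s - k + 1.
        real ((j - 1) choose (i - 1)) * (1 - p) ^ (i - 1) * p ^ (j - i)
        * (if substr s j (j + k - 1) = x then 1 else 0))"

text \<open>Sup-norm of K_s - K_s' (the concatenation over all x of length k).\<close>

definition K_dist :: "real \<Rightarrow> nat \<Rightarrow> bool list \<Rightarrow> bool list \<Rightarrow> real" where
  "K_dist p k s s' =
     Max {\<bar>Kfun p k s x i - Kfun p k s' x i\<bar> | x i.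
            length x = k \<and> i \<in> {1..length s - k + 1}}"

definition bin_entropy :: "real \<Rightarrow> real" where
  "bin_entropy x = - x * log 2 x - (1 - x) * log 2 (1 - x)"

definition alpha_c :: "real \<Rightarrow> real \<Rightarrow> real" where
  "alpha_c c p = 1 + c * log 2 ((1 - p) / p)
     + (c * bin_entropy (1 - p / (1 - p)) + c * log 2 (p / (1 - p))) / (1 - p / (1 - p))"

definition f_c :: "real \<Rightarrow> real \<Rightarrow> nat \<Rightarrow> real" where
  "f_c c p n = (1 + 2 * real n powr alpha_c c p) ^ 2
     / (2 * real n powr (2 * c * log 2 (1 - p) - 1))"

end

theory Submission
  imports Defs
begin


lemma finite_trace: "finite (set_pmf (trace_pmf p s))"
  by (induction s) auto

lemma finite_traces: "finite (set_pmf (traces_pmf p T s))"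
  by (induction T) (auto simp: finite_trace)

lemma exp_bind_finite:
  fixes h :: "'b \<Rightarrow> real"
  assumes "finite (set_pmf M)" "\<And>x. x \<in> set_pmf M \<Longrightarrow> finite (set_pmf (f x))"
  shows "measure_pmf.expectation (bind_pmf M f) h
       = measure_pmf.expectation M (\<lambda>x. measure_pmf.expectation (f x) h)"
  using assms
  by (subst pmf_expectation_bind[of "set_pmf M"]) (auto simp: integral_measure_pmf[of "set_pmf M"] mult.commute)

lemma exp_trace_Cons:
  fixes \<phi> :: "bool list \<Rightarrow> real"
  assumes "0 \<le> p" "p \<le> 1"
  shows "measure_pmf.expectation (trace_pmf p (b # bs)) \<phi>
    = (1 - p) * measure_pmf.expectation (trace_pmf p bs) (\<lambda>t. \<phi> (b # t))
      + p * measure_pmf.expectation (trace_pmf p bs) \<phi>"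
proof -
  have "measure_pmf.expectation (trace_pmf p (b # bs)) \<phi>
      = measure_pmf.expectation (bernoulli_pmf (1-p)) (\<lambda>k. measure_pmf.expectation
          (bind_pmf (trace_pmf p bs) (\<lambda>rest. return_pmf (if k then b # rest else rest))) \<phi>)"
    by (simp only: trace_pmf.simps, rule exp_bind_finite) (auto simp: finite_trace)
  also have "\<dots> = measure_pmf.expectation (bernoulli_pmf (1-p)) (\<lambda>k. measure_pmf.expectation
          (trace_pmf p bs) (\<lambda>rest. \<phi> (if k then b # rest else rest)))"
    by (subst exp_bind_finite) (auto simp: finite_trace)
  finally show ?thesis using assms by (simp add: algebra_simps)
qed

declare trace_pmf.simps(2)[simp del]

primrec Ew :: "real \<Rightarrow> bool list \<Rightarrow> bool list \<Rightarrow> real" where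
  "Ew r [] = (\<lambda>t. 0)"
| "Ew r (a # z) = (\<lambda>t. case t of [] \<Rightarrow> 0 | b # t' \<Rightarrow>
     (if a = b then (if z = [] then 1 else (\<Sum>e<length t'. (-r) ^ e * Ew r z (drop e t'))) else 0))"

definition Fw :: "real \<Rightarrow> bool list \<Rightarrow> bool list \<Rightarrow> real" where
  "Fw r y t = (\<Sum>e<length t. (-r) ^ e * Ew r y (drop e t))"

lemma Ew_Cons_Cons: "Ew r (a # z) (b # t) = (if a = b then (if z = [] then 1 else Fw r z t) else 0)"
  by (simp add: Fw_def)

lemma Ew_Nil2 [simp]: "Ew r x [] = 0"
  by (cases x) auto

declare Ew.simps(2)[simp del] Ew_Cons_Cons[simp]

lemma Fw_Nil: "Fw r y [] = 0" by (simp add: Fw_def)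

lemma Fw_Cons: "Fw r y (b # t) = Ew r y (b # t) + (-r) * Fw r y t"
  unfolding Fw_def length_Cons sum.lessThan_Suc_shift by (simp add: sum_distrib_left mult.assoc)

lemma exp_Fw:
  assumes p: "0 < p" "p < 1" and r: "r = p / (1 - p)"
  shows "y \<noteq> [] \<Longrightarrow> measure_pmf.expectation (trace_pmf p s) (Fw r y)
          = (1 - p) ^ length y * (if take (length y) s = y then 1 else 0)"
proof (induction s arbitrary: y)
  case Nil
  then show ?case by (simp add: Fw_Nil)
next
  case (Cons b bs)
  have rp: "(1 - p) * (- r) + p = 0" using p unfolding r by (simp add: field_simps)
  have "measure_pmf.expectation (trace_pmf p (b # bs)) (Fw r y)
      = (1 - p) * measure_pmf.expectation (trace_pmf p bs) (\<lambda>t. Ew r y (b # t) + (-r) * Fw r y t)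
        + p * measure_pmf.expectation (trace_pmf p bs) (Fw r y)"
    using p by (subst exp_trace_Cons) (auto simp: Fw_Cons)
  also have "\<dots> = (1 - p) * measure_pmf.expectation (trace_pmf p bs) (\<lambda>t. Ew r y (b # t))
        + ((1 - p) * (-r) + p) * measure_pmf.expectation (trace_pmf p bs) (Fw r y)"
    by (subst Bochner_Integration.integral_add)
       (auto simp: integrable_measure_pmf_finite finite_trace algebra_simps)
  also have "\<dots> = (1 - p) * measure_pmf.expectation (trace_pmf p bs) (\<lambda>t. Ew r y (b # t))"
    by (simp only: rp mult_zero_left add_0_right)
  also have "\<dots> = (1 - p) ^ length y * (if take (length y) (b # bs) = y then 1 else 0)"
  proof (cases y)
    case Nil then show ?thesis using Cons by simp
  next
    case (Cons a z)
    show ?thesis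
    proof (cases "z = []")
      case True then show ?thesis using Cons by (simp add: Ew_Cons_Cons)
    next
      case False
      have "measure_pmf.expectation (trace_pmf p bs) (\<lambda>t. Ew r y (b # t))
          = (if a = b then measure_pmf.expectation (trace_pmf p bs) (Fw r z) else 0)"
        using Cons False by (simp add: Ew_Cons_Cons)
      then show ?thesis using Cons.IH[OF False] \<open>y = a # z\<close> by auto
    qed
  qed
  finally show ?case .
qed

lemma exp_Ew_Cons:
  assumes p: "0 < p" "p < 1" and r: "r = p / (1 - p)" and x: "x \<noteq> []"
  shows "measure_pmf.expectation (trace_pmf p bs) (\<lambda>t. Ew r x (b # t))
          = (1 - p) ^ (length x - 1) * (if take (length x) (b # bs) = x then 1 else 0)"
proof (cases x)
  case Nil then show ?thesis using x by simp
next
  case (Cons a z)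
  show ?thesis
  proof (cases "z = []")
    case True then show ?thesis using Cons by (simp add: Ew_Cons_Cons)
  next
    case False
    have "measure_pmf.expectation (trace_pmf p bs) (\<lambda>t. Ew r x (b # t))
        = (if a = b then measure_pmf.expectation (trace_pmf p bs) (Fw r z) else 0)"
      using Cons False by (simp add: Ew_Cons_Cons)
    then show ?thesis using exp_Fw[OF p r False] Cons by auto
  qed
qed

fun Kr :: "real \<Rightarrow> bool list \<Rightarrow> bool list \<Rightarrow> nat \<Rightarrow> real" where
  "Kr p x [] i = 0"
| "Kr p x (b # bs) i = (if i = 0 then (if take (length x) (b # bs) = x then 1 else 0) + p * Kr p x bs 0
       else (1 - p) * Kr p x bs (i - 1) + p * Kr p x bs i)"

lemma exp_Ew:
  assumes p: "0 < p" "p < 1" and r: "r = p / (1 - p)" and x: "x \<noteq> []"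
  shows "measure_pmf.expectation (trace_pmf p s) (\<lambda>t. Ew r x (drop i t)) = (1 - p) ^ length x * Kr p x s i"
proof (induction s arbitrary: i)
  case Nil
  then show ?case by (simp add: Ew_Nil2)
next
  case (Cons b bs)
  have e: "measure_pmf.expectation (trace_pmf p (b # bs)) (\<lambda>t. Ew r x (drop i t))
      = (1 - p) * measure_pmf.expectation (trace_pmf p bs) (\<lambda>t. Ew r x (drop i (b # t)))
        + p * measure_pmf.expectation (trace_pmf p bs) (\<lambda>t. Ew r x (drop i t))"
    using p by (subst exp_trace_Cons) auto
  show ?case
  proof (cases i)
    case 0
    have pw: "(1 - p) * ((1 - p) ^ (length x - 1)) = (1 - p) ^ length x"
      using x by (cases x) auto
    have "measure_pmf.expectation (trace_pmf p (b # bs)) (\<lambda>t. Ew r x (drop i t))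
      = (1 - p) * measure_pmf.expectation (trace_pmf p bs) (\<lambda>t. Ew r x (b # t))
        + p * measure_pmf.expectation (trace_pmf p bs) (\<lambda>t. Ew r x (drop 0 t))"
      using e 0 by simp
    also have "\<dots> = (1 - p) * ((1 - p) ^ (length x - 1)) * (if take (length x) (b # bs) = x then 1 else 0)
        + p * ((1 - p) ^ length x * Kr p x bs 0)"
      by (simp only: exp_Ew_Cons[OF p r x] Cons.IH[of 0] mult.assoc)
    also have "\<dots> = (1 - p) ^ length x * Kr p x (b # bs) i"
      by (simp only: pw) (simp add: 0 algebra_simps)
    finally show ?thesis .
  next
    case (Suc j)
    then show ?thesis using e Cons.IH[of j] Cons.IH[of i] by (simp add: algebra_simps)
  qed
qed



definition W0 :: "real \<Rightarrow> nat \<Rightarrow> nat \<Rightarrow> real" where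
  "W0 p i j = real (j choose i) * (1 - p) ^ i * p ^ (j - i)"

definition KK :: "real \<Rightarrow> bool list \<Rightarrow> bool list \<Rightarrow> nat \<Rightarrow> real" where
  "KK p x s i = (\<Sum>j<length s. W0 p i j * (if take (length x) (drop j s) = x then 1 else 0))"

lemma W0_0: "W0 p i 0 = (if i = 0 then 1 else 0)"
  by (simp add: W0_def)

lemma W0_Suc0: "W0 p 0 (Suc j) = p * W0 p 0 j"
  by (simp add: W0_def)

lemma W0_SucSuc: "W0 p (Suc i) (Suc j) = (1 - p) * W0 p i j + p * W0 p (Suc i) j"
proof (cases "i \<le> j")
  case True
  show ?thesis
  proof (cases "Suc i \<le> j")
    case True
    then have e: "j - i = Suc (j - Suc i)" by simp
    show ?thesis unfolding W0_def using True
      by (simp add: e algebra_simps)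
  next
    case False
    then have "j = i" using \<open>i \<le> j\<close> by simp
    then show ?thesis by (simp add: W0_def)
  qed
next
  case False
  then show ?thesis by (simp add: W0_def binomial_eq_0)
qed

lemma Kr_KK: "Kr p x s i = KK p x s i"
proof (induction s arbitrary: i)
  case Nil
  then show ?case by (simp add: KK_def)
next
  case (Cons b bs)
  have KK: "KK p x (b # bs) i = W0 p i 0 * (if take (length x) (b # bs) = x then 1 else 0)
     + (\<Sum>j<length bs. W0 p i (Suc j) * (if take (length x) (drop j bs) = x then 1 else 0))"
    unfolding KK_def length_Cons sum.lessThan_Suc_shift by simp
  show ?case
  proof (cases i)
    case 0
    then show ?thesis using Cons.IH[of 0] unfolding KK
      by (simp add: W0_0 W0_Suc0 KK_def sum_distrib_left mult.assoc)
  next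
    case (Suc i')
    let ?I = "\<lambda>j. (if take (length x) (drop j bs) = x then 1 else 0) :: real"
    have "(\<Sum>j<length bs. W0 p i (Suc j) * ?I j)
       = (1 - p) * (\<Sum>j<length bs. W0 p i' j * ?I j) + p * (\<Sum>j<length bs. W0 p i j * ?I j)"
      unfolding Suc W0_SucSuc by (simp add: sum.distrib sum_distrib_left ring_distribs mult.assoc)
    then show ?thesis using Cons.IH[of i'] Cons.IH[of i] unfolding KK
      by (simp add: W0_0 KK_def Suc)
  qed
qed

lemma sum_shift1: "(\<Sum>j = 1..m. g j) = (\<Sum>j<m. g (Suc j :: nat))"
  by (induction m) (auto simp: atLeastAtMostSuc_conv ac_simps)

lemma Kfun_KK:
  assumes "length x = k" "i \<ge> 1" "k \<ge> 1"
  shows "Kfun p k s x i = KK p x s (i - 1)"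
proof -
  define h where "h j = W0 p (i - 1) j * (if take k (drop j s) = x then 1 else 0)" for j
  have hz: "h j = 0" if "j + k > length s" for j
    using that assms unfolding h_def by auto
  have "Kfun p k s x i = (\<Sum>j<length s - k + 1. h j)"
    unfolding Kfun_def sum_shift1 h_def W0_def substr_def using assms by simp
  also have "\<dots> = (\<Sum>j<length s + 1. h j)"
    by (rule sum.mono_neutral_left) (use hz in auto)
  also have "\<dots> = (\<Sum>j<length s. h j)"
    by (rule sum.mono_neutral_right) (use hz assms in auto)
  finally show ?thesis unfolding KK_def h_def using assms by simp
qed

lemma Ew_bound:
  assumes r: "0 \<le> r" "r < 1"
  shows "x \<noteq> [] \<Longrightarrow> \<bar>Ew r x t\<bar> \<le> (1 / (1 - r)) ^ (length x - 1)"
proof (induction x arbitrary: t)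
  case Nil
  then show ?case by simp
next
  case (Cons a z)
  show ?case
  proof (cases t)
    case Nil then show ?thesis using r by simp
  next
    case (Cons b t')
    show ?thesis
    proof (cases "a = b \<and> z \<noteq> []")
      case False
      then show ?thesis using Cons r by auto
    next
      case True
      define q where "q = 1 / (1 - r)"
      have q0: "q \<ge> 0" using r by (simp add: q_def)
      have "\<bar>Fw r z t'\<bar> \<le> (\<Sum>e<length t'. \<bar>(-r) ^ e * Ew r z (drop e t')\<bar>)"
        unfolding Fw_def by (rule sum_abs)
      also have "\<dots> \<le> (\<Sum>e<length t'. r ^ e * q ^ (length z - 1))"
        using Cons.IH True r unfolding q_def
        by (intro sum_mono) (auto simp: abs_mult power_abs intro!: mult_left_mono)
      also have "\<dots> = (\<Sum>e<length t'. r ^ e) * q ^ (length z - 1)"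
        by (simp add: sum_distrib_right)
      also have "\<dots> \<le> q * q ^ (length z - 1)"
      proof (intro mult_right_mono)
        have "(\<Sum>e<length t'. r ^ e) = (1 - r ^ length t') / (1 - r)"
          using r by (subst sum_gp_strict) auto
        also have "\<dots> \<le> 1 / (1 - r)" using r by (intro divide_right_mono) auto
        finally show "(\<Sum>e<length t'. r ^ e) \<le> q" by (simp add: q_def)
      qed (use q0 in auto)
      also have "\<dots> = q ^ (length (a # z) - 1)"
        using True by (cases z) auto
      finally show ?thesis using True Cons by (simp add: q_def)
    qed
  qed
qed



declare traces_pmf.simps(2)[simp del]

lemma mgf_traces:
  "(\<integral>\<^sup>+ts. ennreal (exp (l * (sum_list (map Y ts) - real T * \<mu>))) \<partial>traces_pmf p T s)
   = (\<integral>\<^sup>+t. ennreal (exp (l * (Y t - \<mu>))) \<partial>trace_pmf p s) ^ T"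
proof (induction T)
  case 0
  then show ?case by simp
next
  case (Suc T)
  have "(\<integral>\<^sup>+ts. ennreal (exp (l * (sum_list (map Y ts) - real (Suc T) * \<mu>))) \<partial>traces_pmf p (Suc T) s)
     = (\<integral>\<^sup>+t. \<integral>\<^sup>+ts. ennreal (exp (l * (Y t - \<mu>))) * ennreal (exp (l * (sum_list (map Y ts) - real T * \<mu>)))
          \<partial>traces_pmf p T s \<partial>trace_pmf p s)"
    apply (simp add: traces_pmf.simps(2) flip: ennreal_mult exp_add)
    apply (intro nn_integral_cong arg_cong[where f=ennreal] arg_cong[where f=exp])
    apply (simp add: algebra_simps)
    done
  also have "\<dots> = (\<integral>\<^sup>+t. ennreal (exp (l * (Y t - \<mu>))) *
        (\<integral>\<^sup>+t. ennreal (exp (l * (Y t - \<mu>))) \<partial>trace_pmf p s) ^ T \<partial>trace_pmf p s)"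
    by (simp add: nn_integral_cmult Suc)
  also have "\<dots> = (\<integral>\<^sup>+t. ennreal (exp (l * (Y t - \<mu>))) \<partial>trace_pmf p s) ^ Suc T"
    by (simp add: nn_integral_multc)
  finally show ?case .
qed

lemma hoeff_trace:
  fixes Y :: "bool list \<Rightarrow> real"
  assumes "\<And>t. a \<le> Y t" "\<And>t. Y t \<le> b" "l > 0"
  shows "(\<integral>\<^sup>+t. ennreal (exp (l * (Y t - measure_pmf.expectation (trace_pmf p s) Y))) \<partial>trace_pmf p s)
         \<le> ennreal (exp (l\<^sup>2 * (b - a)\<^sup>2 / 8))"
proof -
  interpret interval_bounded_random_variable "measure_pmf (trace_pmf p s)" Y a b
    by unfold_locales (use assms in auto)
  show ?thesis using Hoeffdings_lemma_nn_integral[OF assms(3)] by simp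
qed

lemma tail_upper:
  fixes Y :: "bool list \<Rightarrow> real" and p :: real and s :: "bool list"
  assumes ab: "\<And>t. a \<le> Y t" "\<And>t. Y t \<le> b" "a < b" and eps: "\<epsilon> > 0"
  defines "\<mu> \<equiv> measure_pmf.expectation (trace_pmf p s) Y"
  shows "measure_pmf.prob (traces_pmf p T s) {ts. sum_list (map Y ts) - real T * \<mu> \<ge> real T * \<epsilon>}
          \<le> exp (- 2 * real T * \<epsilon>\<^sup>2 / (b - a)\<^sup>2)"
proof -
  define d where "d = (b - a)\<^sup>2"
  have d: "d > 0" using ab by (simp add: d_def)
  define l where "l = 4 * \<epsilon> / d"
  have l: "l > 0" using d eps by (simp add: l_def)
  let ?f = "\<lambda>ts. sum_list (map Y ts) - real T * \<mu>"
  have "ennreal (measure_pmf.prob (traces_pmf p T s) {ts. ?f ts \<ge> real T * \<epsilon>})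
      = emeasure (measure_pmf (traces_pmf p T s)) {ts\<in>UNIV. ?f ts \<ge> real T * \<epsilon>}"
    by (simp add: measure_pmf.emeasure_eq_measure)
  also have "\<dots> \<le> ennreal (exp (- l * (real T * \<epsilon>))) *
      (\<integral>\<^sup>+ts. ennreal (exp (l * ?f ts)) * indicator UNIV ts \<partial>traces_pmf p T s)"
    by (rule Chernoff_ineq_nn_integral_ge[OF l]) auto
  also have "(\<integral>\<^sup>+ts. ennreal (exp (l * ?f ts)) * indicator UNIV ts \<partial>traces_pmf p T s)
      = (\<integral>\<^sup>+t. ennreal (exp (l * (Y t - \<mu>))) \<partial>trace_pmf p s) ^ T"
    by (simp add: mgf_traces)
  also have "ennreal (exp (- l * (real T * \<epsilon>))) * \<dots> \<le> ennreal (exp (- l * (real T * \<epsilon>))) * ennreal (exp (l\<^sup>2 * (b - a)\<^sup>2 / 8)) ^ T"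
    by (intro mult_left_mono power_mono) (use hoeff_trace[OF ab(1,2) l, of p s] in \<open>auto simp: \<mu>_def\<close>)
  also have "ennreal (exp (- l * (real T * \<epsilon>))) * ennreal (exp (l\<^sup>2 * (b - a)\<^sup>2 / 8)) ^ T
      = ennreal (exp (- l * (real T * \<epsilon>) + real T * (l\<^sup>2 * d / 8)))"
    by (simp add: ennreal_power d_def flip: exp_of_nat_mult ennreal_mult exp_add)
  also have "- l * (real T * \<epsilon>) + real T * (l\<^sup>2 * d / 8) = - 2 * real T * \<epsilon>\<^sup>2 / (b - a)\<^sup>2"
    using d unfolding l_def d_def[symmetric] by (simp add: field_simps power2_eq_square)
  finally show ?thesis by (subst (asm) ennreal_le_iff) auto
qed



lemma npowr:
  assumes "n > 0" "y > 0" "real k = c * log 2 n"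
  shows "n powr (c * log 2 y) = y ^ k"
proof -
  have "y ^ k = y powr real k" using assms(2) by (simp add: powr_realpow)
  also have "\<dots> = exp (c * (ln n / ln 2) * ln y)" using assms by (simp add: powr_def log_def)
  also have "\<dots> = n powr (c * log 2 y)" using assms by (simp add: powr_def log_def algebra_simps)
  finally show ?thesis by simp
qed

lemma alpha_eq:
  assumes "0 < p" "p < 1/2"
  shows "alpha_c c p = 1 + c * log 2 (1 / (1 - p / (1 - p)))"
proof -
  define r where "r = p / (1 - p)"
  have r: "0 < r" "r < 1" using assms by (auto simp: r_def field_simps)
  have l1: "log 2 ((1 - p) / p) = - log 2 r" unfolding r_def using assms
    by (simp add: log_divide)
  have H: "bin_entropy (1 - r) = - (1 - r) * log 2 (1 - r) - r * log 2 r"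
    by (simp add: bin_entropy_def)
  have "(c * bin_entropy (1 - r) + c * log 2 r) / (1 - r) = c * (log 2 r - log 2 (1 - r))"
    using r unfolding H by (simp add: field_simps)
  then have "alpha_c c p = 1 - c * log 2 (1 - r)"
    unfolding alpha_c_def r_def[symmetric] l1 by (simp add: algebra_simps)
  also have "\<dots> = 1 + c * log 2 (1 / (1 - r))" using r by (simp add: log_divide)
  finally show ?thesis by (simp add: r_def)
qed



lemma arith:
  fixes p c \<epsilon> \<delta> :: real and n k T :: nat
  assumes "0 < p" "p < 1/2" "0 < c"
    and kk: "real k = c * log 2 (real n)" "k \<ge> 2"
    and "\<epsilon> > 0" "0 < \<delta>" "\<delta> < 1"
    and TT: "real T \<ge> ln (2 * real n powr (1 + c) / \<delta>) * \<epsilon> powr (-2) * f_c c p n"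
  defines "Bnd \<equiv> (1 / (1 - p / (1 - p))) ^ (k - 1) / (1 - p) ^ k"
  shows "T > 0 \<and> real (2 ^ k * (n - k + 1)) * (2 * exp (- 2 * real T * \<epsilon>\<^sup>2 / (2 * Bnd)\<^sup>2)) \<le> \<delta>"
proof -
  define r where "r = p / (1 - p)"
  have r: "0 < r" "r < 1" using assms by (auto simp: r_def field_simps)
  define q where "q = 1 / (1 - r)"
  have q: "q \<ge> 1" using r by (simp add: q_def field_simps)
  have n2: "n \<ge> 2"
  proof (rule ccontr)
    assume "\<not> n \<ge> 2"
    then have "n = 0 \<or> n = 1" by auto
    then have "real k = 0" using kk by (auto simp: log_def)
    then show False using kk(2) by simp
  qed
  have np: "real n > 0" using n2 by simp
  have p1: "0 < 1 - p" using assms by simp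
  have pk: "(1 - p) ^ k > 0" using p1 by simp
  have Bnd: "Bnd = q ^ (k - 1) / (1 - p) ^ k" unfolding Bnd_def q_def r_def ..
  have "alpha_c c p = 1 + c * log 2 q" using alpha_eq[OF assms(1,2)] by (simp add: q_def r_def)
  then have na: "real n powr alpha_c c p = real n * q ^ k"
    using npowr[OF np _ kk(1), of q] q by (simp add: powr_add)
  have "2 * c * log 2 (1 - p) - 1 = c * log 2 ((1 - p) ^ 2) - 1"
    using p1 by (simp add: log_nat_power)
  then have nb: "real n powr (2 * c * log 2 (1 - p) - 1) = ((1 - p) ^ 2) ^ k / real n"
  proof (simp only:)
    show "real n powr (c * log 2 ((1 - p) ^ 2) - 1) = ((1 - p) ^ 2) ^ k / real n"
      using npowr[OF np _ kk(1), of "(1-p)^2"] p1 np by (simp only: powr_diff) simp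
  qed
  have fc: "f_c c p n = (1 + 2 * (real n * q ^ k))\<^sup>2 * real n / (2 * ((1 - p) ^ k)\<^sup>2)"
    unfolding f_c_def na nb using np by (simp add: power_mult_distrib power2_eq_square)
  have qk: "q ^ (k - 1) \<le> q ^ k" using q by (intro power_increasing) auto
  have q0: "0 \<le> q ^ (k - 1)" using q by simp
  have "2 * q ^ (k - 1) \<le> 1 + 2 * (real n * q ^ k)"
  proof -
    have "q ^ k \<le> real n * q ^ k" using n2 q by (intro mult_le_cancel_right1[THEN iffD2]) auto
    then show ?thesis using qk by linarith
  qed
  then have "(2 * q ^ (k - 1))\<^sup>2 \<le> (1 + 2 * (real n * q ^ k))\<^sup>2"
    using q0 by (intro power_mono) auto
  then have "4 * (q ^ (k - 1))\<^sup>2 * 1 \<le> (1 + 2 * (real n * q ^ k))\<^sup>2 * (real n / 2)"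
    using n2 by (intro mult_mono) (auto simp: power_mult_distrib)
  then have A: "2 * (q ^ (k - 1))\<^sup>2 \<le> (1 + 2 * (real n * q ^ k))\<^sup>2 * real n / 2"
    using zero_le_power2[of "q ^ (k - 1)"] by (simp only: times_divide_eq_right mult_1_right)
  have e1: "2 * Bnd\<^sup>2 = 2 * (q ^ (k - 1))\<^sup>2 / ((1 - p) ^ k)\<^sup>2" unfolding Bnd by (simp add: power_divide)
  have e2: "f_c c p n = (1 + 2 * (real n * q ^ k))\<^sup>2 * real n / 2 / ((1 - p) ^ k)\<^sup>2"
    unfolding fc by simp
  have fB: "2 * Bnd\<^sup>2 \<le> f_c c p n"
    unfolding e1 e2 using A pk by (intro divide_right_mono) auto
  define LL where "LL = ln (2 * real n powr (1 + c) / \<delta>)"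
  have n1c: "real n powr (1 + c) \<ge> 1" using n2 assms by (intro ge_one_powr_ge_zero) auto
  have "2 * real n powr (1 + c) / \<delta> > 1" using n1c assms by (simp add: field_simps)
  then have LL: "LL > 0" unfolding LL_def by simp
  have Bpos: "Bnd > 0" unfolding Bnd using pk q by simp
  have eps2: "\<epsilon> powr (-2) = 1 / \<epsilon>\<^sup>2" using assms by (simp add: powr_minus powr_realpow inverse_eq_divide)
  have "LL * (2 * Bnd\<^sup>2) / \<epsilon>\<^sup>2 \<le> LL * f_c c p n / \<epsilon>\<^sup>2"
    using fB LL assms by (intro divide_right_mono mult_left_mono) auto
  also have "\<dots> \<le> real T" using TT unfolding LL_def eps2 by simp
  finally have T1: "LL * (2 * Bnd\<^sup>2) / \<epsilon>\<^sup>2 \<le> real T" .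
  have Tpos: "T > 0"
  proof -
    have "0 < LL * (2 * Bnd\<^sup>2) / \<epsilon>\<^sup>2" using LL Bpos assms by simp
    then show ?thesis using T1 by linarith
  qed
  have ex: "LL \<le> 2 * real T * \<epsilon>\<^sup>2 / (2 * Bnd)\<^sup>2"
    using T1 Bpos assms by (simp add: field_simps power2_eq_square)
  define N where "N = real (2 ^ k * (n - k + 1))"
  have "real (2 ^ k :: nat) = 2 powr real k" by (simp add: powr_realpow)
  also have "\<dots> = real n powr c" using kk np by (simp add: powr_def log_def)
  finally have twok: "real (2 ^ k :: nat) = real n powr c" .
  have "real (n - k + 1) \<le> real n" using kk(2) n2 by (simp add: of_nat_diff)
  then have "N \<le> real n powr c * real n" unfolding N_def of_nat_mult twok
    by (intro mult_left_mono) auto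
  also have "\<dots> = real n powr (1 + c)" using np by (simp add: powr_add)
  finally have Nle: "N \<le> real n powr (1 + c)" .
  have Npos: "N > 0" unfolding N_def of_nat_0_less_iff by simp
  have "exp (- 2 * real T * \<epsilon>\<^sup>2 / (2 * Bnd)\<^sup>2) \<le> exp (- LL)" using ex by simp
  also have "\<dots> = \<delta> / (2 * real n powr (1 + c))" unfolding LL_def
    using assms n1c np by (simp add: exp_minus ln_div exp_diff)
  also have "\<dots> \<le> \<delta> / (2 * N)" using Nle Npos assms(7) n1c np by (intro divide_left_mono) (auto intro!: mult_pos_pos)
  finally have "N * (2 * exp (- 2 * real T * \<epsilon>\<^sup>2 / (2 * Bnd)\<^sup>2)) \<le> N * (2 * (\<delta> / (2 * N)))"
    using Npos by (intro mult_left_mono) auto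
  also have "\<dots> = \<delta>" using Npos by simp
  finally show ?thesis using Tpos unfolding N_def by simp
qed



definition Gst :: "real \<Rightarrow> nat \<Rightarrow> bool list \<Rightarrow> nat \<Rightarrow> bool list \<Rightarrow> real" where
  "Gst p k x i t = Ew (p / (1 - p)) x (drop (i - 1) t) / (1 - p) ^ k"

definition Bd :: "real \<Rightarrow> nat \<Rightarrow> real" where
  "Bd p k = (1 / (1 - p / (1 - p))) ^ (k - 1) / (1 - p) ^ k"

lemma Gst_exp:
  assumes "0 < p" "p < 1/2" "length x = k" "k \<ge> 1" "i \<ge> 1"
  shows "measure_pmf.expectation (trace_pmf p s) (Gst p k x i) = Kfun p k s x i"
proof -
  have p: "0 < p" "p < 1" using assms by auto
  have x: "x \<noteq> []" using assms by auto
  have "measure_pmf.expectation (trace_pmf p s) (Gst p k x i)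
      = measure_pmf.expectation (trace_pmf p s) (\<lambda>t. Ew (p / (1 - p)) x (drop (i - 1) t)) / (1 - p) ^ k"
    unfolding Gst_def by simp
  also have "\<dots> = Kr p x s (i - 1)"
    using exp_Ew[OF p refl x, of s "i - 1"] assms p by simp
  also have "\<dots> = Kfun p k s x i" using Kr_KK Kfun_KK[of x k i p s] assms by simp
  finally show ?thesis .
qed

lemma Gst_bound:
  assumes "0 < p" "p < 1/2" "length x = k"
  shows "\<bar>Gst p k x i t\<bar> \<le> Bd p k"
proof (cases "x = []")
  case True
  then show ?thesis using assms by (simp add: Gst_def Bd_def field_simps)
next
  case False
  have r: "0 \<le> p / (1 - p)" "p / (1 - p) < 1" using assms by (auto simp: field_simps)
  have pk: "(1 - p) ^ k > 0" using assms by simp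
  show ?thesis unfolding Gst_def Bd_def using Ew_bound[OF r False, of "drop (i - 1) t"] pk assms
    by (simp add: abs_div divide_right_mono)
qed

lemma sum_list_neg: "sum_list (map (\<lambda>t. - f t) ts) = - sum_list (map (f :: 'a \<Rightarrow> real) ts)"
  by (induction ts) auto

lemma two_sided:
  fixes Y :: "bool list \<Rightarrow> real" and p :: real and s :: "bool list"
  assumes ab: "\<And>t. \<bar>Y t\<bar> \<le> B" "B > 0" and eps: "\<epsilon> > 0"
  defines "\<mu> \<equiv> measure_pmf.expectation (trace_pmf p s) Y"
  shows "measure_pmf.prob (traces_pmf p T s) {ts. \<bar>sum_list (map Y ts) - real T * \<mu>\<bar> \<ge> real T * \<epsilon>}
          \<le> 2 * exp (- 2 * real T * \<epsilon>\<^sup>2 / (2 * B)\<^sup>2)"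
proof -
  have b1: "\<And>t. - B \<le> Y t" "\<And>t. Y t \<le> B" using ab(1) by (simp_all add: abs_le_iff, smt (verit) ab(1) abs_le_iff)
  have b2: "\<And>t. - B \<le> - Y t" "\<And>t. - Y t \<le> B" using b1 by (simp_all, smt (verit) b1)
  have e: "B - - B = 2 * B" by simp
  have U: "measure_pmf.prob (traces_pmf p T s) {ts. sum_list (map Y ts) - real T * \<mu> \<ge> real T * \<epsilon>}
          \<le> exp (- 2 * real T * \<epsilon>\<^sup>2 / (2 * B)\<^sup>2)"
    using tail_upper[OF b1 _ eps, where p=p and s=s and T=T] ab(2) unfolding \<mu>_def e by simp
  have mneg: "measure_pmf.expectation (trace_pmf p s) (\<lambda>t. - Y t) = - \<mu>" unfolding \<mu>_def by simp
  have L: "measure_pmf.prob (traces_pmf p T s) {ts. sum_list (map (\<lambda>t. - Y t) ts) - real T * (- \<mu>) \<ge> real T * \<epsilon>}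
          \<le> exp (- 2 * real T * \<epsilon>\<^sup>2 / (2 * B)\<^sup>2)"
    using tail_upper[where Y="\<lambda>t. - Y t" and p=p and s=s and T=T, OF b2 _ eps] ab(2) unfolding mneg e by simp
  have "{ts. \<bar>sum_list (map Y ts) - real T * \<mu>\<bar> \<ge> real T * \<epsilon>}
      \<subseteq> {ts. sum_list (map Y ts) - real T * \<mu> \<ge> real T * \<epsilon>}
         \<union> {ts. sum_list (map (\<lambda>t. - Y t) ts) - real T * (- \<mu>) \<ge> real T * \<epsilon>}"
    unfolding sum_list_neg by (auto simp: abs_le_iff)
  then have "measure_pmf.prob (traces_pmf p T s) {ts. \<bar>sum_list (map Y ts) - real T * \<mu>\<bar> \<ge> real T * \<epsilon>}
      \<le> measure_pmf.prob (traces_pmf p T s) ({ts. sum_list (map Y ts) - real T * \<mu> \<ge> real T * \<epsilon>}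
         \<union> {ts. sum_list (map (\<lambda>t. - Y t) ts) - real T * (- \<mu>) \<ge> real T * \<epsilon>})"
    by (intro measure_pmf.finite_measure_mono) auto
  also have "\<dots> \<le> measure_pmf.prob (traces_pmf p T s) {ts. sum_list (map Y ts) - real T * \<mu> \<ge> real T * \<epsilon>}
      + measure_pmf.prob (traces_pmf p T s) {ts. sum_list (map (\<lambda>t. - Y t) ts) - real T * (- \<mu>) \<ge> real T * \<epsilon>}"
    by (rule measure_Un_le) auto
  finally show ?thesis using U L by simp
qed



theorem corollary1:
  fixes p c \<epsilon> \<delta> :: real and n k T :: nat and A :: "bool list set"
  assumes "0 < p" "p < 1/2" "0 < c"
    and "real k = c * log 2 (real n)" "k \<ge> 2"
    and "\<epsilon> > 0" "0 < \<delta>" "\<delta> < 1"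
    and "\<forall>s\<in>A. length s = n"
    and "\<forall>s\<in>A. \<forall>s'\<in>A. s \<noteq> s' \<longrightarrow> K_dist p k s s' \<ge> 2 * \<epsilon>"
    and "real T \<ge> ln (2 * real n powr (1 + c) / \<delta>) * \<epsilon> powr (-2) * f_c c p n"
  shows "\<exists>dec :: bool list list \<Rightarrow> bool list. \<forall>s\<in>A.
           measure_pmf.prob (traces_pmf p T s) {ts. dec ts = s} \<ge> 1 - \<delta>"
proof -
  note ar = arith[OF assms(1-8) assms(11)]
  have Tpos: "T > 0" using ar by simp
  have Bd: "Bd p k > 0" unfolding Bd_def using assms by (simp add: field_simps)
  define P where "P = {x :: bool list. length x = k} \<times> {1..n - k + 1}"
  have LE: "{x :: bool list. length x = k} = {xs. set xs \<subseteq> UNIV \<and> length xs = k}" by simp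
  have finL: "finite {x :: bool list. length x = k}" unfolding LE by (rule finite_lists_length_eq) simp
  have cardL: "card {x :: bool list. length x = k} = 2 ^ k" unfolding LE card_lists_length_eq[OF finite_class.finite_UNIV]
    by simp
  have finP: "finite P" unfolding P_def using finL by simp
  have cardP: "card P = 2 ^ k * (n - k + 1)" unfolding P_def
    by (simp add: card_cartesian_product cardL)
  define est where "est x i ts = sum_list (map (Gst p k x i) ts) / real T" for x i ts
  define good where "good s' ts \<longleftrightarrow> (\<forall>(x, i)\<in>P. \<bar>Kfun p k s' x i - est x i ts\<bar> < \<epsilon>)" for s' ts
  define dec where "dec ts = (SOME s'. s' \<in> A \<and> good s' ts)" for ts
  have "\<forall>s\<in>A. measure_pmf.prob (traces_pmf p T s) {ts. dec ts = s} \<ge> 1 - \<delta>"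
  proof
    fix s assume sA: "s \<in> A"
    define Bad where "Bad xi = {ts. \<bar>sum_list (map (Gst p k (fst xi) (snd xi)) ts) - real T * Kfun p k s (fst xi) (snd xi)\<bar> \<ge> real T * \<epsilon>}" for xi
    have sub: "UNIV - (\<Union>xi\<in>P. Bad xi) \<subseteq> {ts. dec ts = s}"
    proof
      fix ts assume ts: "ts \<in> UNIV - (\<Union>xi\<in>P. Bad xi)"
      have gs: "good s ts" unfolding good_def
      proof (intro ballI, clarify)
        fix x i assume xi: "(x, i) \<in> P"
        then have "\<bar>sum_list (map (Gst p k x i) ts) - real T * Kfun p k s x i\<bar> < real T * \<epsilon>"
          using ts unfolding Bad_def by force
        then have "\<bar>sum_list (map (Gst p k x i) ts) / real T - Kfun p k s x i\<bar> < \<epsilon>"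
          using Tpos by (simp add: field_simps abs_divide)
        then show "\<bar>Kfun p k s x i - est x i ts\<bar> < \<epsilon>" unfolding est_def by linarith
      qed
      have "dec ts \<in> A \<and> good (dec ts) ts" unfolding dec_def
        by (rule someI[of _ s]) (use sA gs in auto)
      then have dA: "dec ts \<in> A" and gd: "good (dec ts) ts" by auto
      show "ts \<in> {ts. dec ts = s}"
      proof (rule ccontr)
        assume "ts \<notin> {ts. dec ts = s}"
        then have ne: "s \<noteq> dec ts" by simp
        have KD: "K_dist p k s (dec ts) \<ge> 2 * \<epsilon>" using assms(10) sA dA ne by blast
        define S where "S = {\<bar>Kfun p k s x i - Kfun p k (dec ts) x i\<bar> | x i.
            length x = k \<and> i \<in> {1..length s - k + 1}}"
        have SP: "S = (\<lambda>(x, i). \<bar>Kfun p k s x i - Kfun p k (dec ts) x i\<bar>) ` P"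
          using assms(9) sA unfolding S_def P_def by (simp only:) (rule set_eqI, auto simp: image_iff; force)
        have "(replicate k True, 1) \<in> P" unfolding P_def by simp
        then have "S \<noteq> {}" unfolding SP by blast
        then have "Max S \<in> S" using finP unfolding SP by (intro Max_in) auto
        then obtain x i where xi: "(x, i) \<in> P"
          and M: "Max S = \<bar>Kfun p k s x i - Kfun p k (dec ts) x i\<bar>" unfolding SP by auto
        have "K_dist p k s (dec ts) = Max S" unfolding K_dist_def S_def ..
        then have "\<bar>Kfun p k s x i - Kfun p k (dec ts) x i\<bar> \<ge> 2 * \<epsilon>" using KD M by simp
        moreover have "\<bar>Kfun p k s x i - est x i ts\<bar> < \<epsilon>" using gs xi unfolding good_def by auto
        moreover have "\<bar>Kfun p k (dec ts) x i - est x i ts\<bar> < \<epsilon>" using gd xi unfolding good_def by auto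
        ultimately show False by linarith
      qed
    qed
    have bad: "measure_pmf.prob (traces_pmf p T s) (Bad xi) \<le> 2 * exp (- 2 * real T * \<epsilon>\<^sup>2 / (2 * Bd p k)\<^sup>2)"
      if "xi \<in> P" for xi
    proof -
      obtain x i where xi: "xi = (x, i)" by force
      have lx: "length x = k" and i1: "i \<ge> 1" using that unfolding xi P_def by auto
      have "Kfun p k s x i = measure_pmf.expectation (trace_pmf p s) (Gst p k x i)"
        using Gst_exp[OF assms(1,2) lx _ i1] assms(5) by simp
      then show ?thesis unfolding Bad_def xi fst_conv snd_conv
        using two_sided[OF Gst_bound[OF assms(1,2) lx] Bd assms(6), where p=p and s=s and T=T] by simp
    qed
    have "measure_pmf.prob (traces_pmf p T s) (\<Union>xi\<in>P. Bad xi)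
        \<le> (\<Sum>xi\<in>P. measure_pmf.prob (traces_pmf p T s) (Bad xi))"
      by (rule measure_pmf.finite_measure_subadditive_finite) (use finP in auto)
    also have "\<dots> \<le> (\<Sum>xi\<in>P. 2 * exp (- 2 * real T * \<epsilon>\<^sup>2 / (2 * Bd p k)\<^sup>2))"
      by (rule sum_mono) (rule bad)
    also have "\<dots> = real (card P) * (2 * exp (- 2 * real T * \<epsilon>\<^sup>2 / (2 * Bd p k)\<^sup>2))" by simp
    also have "\<dots> \<le> \<delta>" using ar unfolding cardP Bd_def by simp
    finally have U: "measure_pmf.prob (traces_pmf p T s) (\<Union>xi\<in>P. Bad xi) \<le> \<delta>" .
    have "1 - \<delta> \<le> measure_pmf.prob (traces_pmf p T s) (UNIV - (\<Union>xi\<in>P. Bad xi))"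
      using measure_pmf.prob_compl[of "\<Union>xi\<in>P. Bad xi" "traces_pmf p T s"] U by simp
    also have "\<dots> \<le> measure_pmf.prob (traces_pmf p T s) {ts. dec ts = s}"
      by (rule measure_pmf.finite_measure_mono[OF sub]) auto
    finally show "measure_pmf.prob (traces_pmf p T s) {ts. dec ts = s} \<ge> 1 - \<delta>" .
  qed
  then show ?thesis by blast
qed

end
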